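(* Let $n\ge1$, let $k,k'$ be divisors of $n$, and let $\mathbf{S}=\mathbf{P\L}_k\times\mathbf{P\L}_{k'}$. (1) Let $\mathbf{R}$ be a subalgebra of $\mathbf{P\L}_n\times\mathbf{P\L}_n$ satisfying: - $\mathbf{R}\subseteq{\le}$; - $\mathbf{R}$ is not the diagonal of a subalgebra of $\mathbf{P\L}_n$; - $\mathrm{pr}_1(\mathbf{R})\times\mathrm{pr}_2(\mathbf{R})=\mathbf{S}$. For each $i=0,\dots,k$ let $y_i$ be the least element of $\mathbf{P\L}_{k'}$ with $(\tfrac ik,y_i)\in\mathbf{R}$. Such $y_i$ exists, $y_0=0$ and $y_k=1$, and $$\mathbf{R}=\bigcup_{i=0}^k C_{(\frac ik,y_i),\mathbf{S}}.$$ (2) Let $y_0\le y_1\le\dots\le y_k$ be elements of $\mathbf{P\L}_{k'}$ with $y_0=0$, $y_k=1$ and $\tfrac ik\le y_i$ for $i=1,\dots,k-1$. Put $\mathbf{R}=\bigcup_{i=0}^k C_{(\frac ik,y_i),\mathbf{S}}$. Then $\mathbf{R}$ is a subuniverse of $\mathbf{S}$ if and only if $$(\tfrac ik,y_i)\odot(\tfrac jk,y_j)\in\mathbf{R}\quad\text{and}\quad(\tfrac ik,y_i)\oplus(\tfrac jk,y_j)\in\mathbf{R}$$ for all $i,j\in\{1,\dots,k-1\}$. Here the operations are computed componentwise.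
   Context: For $n\ge 1$, the algebra $\mathbf{P\L}_n=\langle\{0,\tfrac1n,\dots,\tfrac{n-1}{n},1\},\wedge,\vee,\odot,\oplus,0,1\rangle$ has $\wedge=\min$, $\vee=\max$, $x\odot y=\max\{0,x+y-1\}$ and $x\oplus y=\min\{1,x+y\}$. For a divisor $k$ of $n$, $\mathbf{P\L}_k$ denotes the subalgebra of $\mathbf{P\L}_n$ with universe $\{\tfrac ik:0\le i\le k\}$. The order is ${\le}=\{(x,y): x\le y\}\subseteq\mathbf{P\L}_n^2$. For a product $\mathbf{S}$ of two subalgebras of $\mathbf{P\L}_n$ and $(x,y)\in\mathbf{S}$ with $x\le y$, define $$C_{(x,y),\mathbf{S}}=\{(x',y')\in \mathbf{S}: x'\le x,\ y\le y'\}.$$ *)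

theory Defs
  imports Complex_Main
begin

definition PL :: "nat \<Rightarrow> real set" where
  "PL n = {real i / real n | i. i \<le> n}"

definition luk_odot :: "real \<Rightarrow> real \<Rightarrow> real" where
  "luk_odot x y = max 0 (x + y - 1)"

definition luk_oplus :: "real \<Rightarrow> real \<Rightarrow> real" where
  "luk_oplus x y = min 1 (x + y)"

definition pmin :: "real \<times> real \<Rightarrow> real \<times> real \<Rightarrow> real \<times> real" where
  "pmin p q = (min (fst p) (fst q), min (snd p) (snd q))"

definition pmax :: "real \<times> real \<Rightarrow> real \<times> real \<Rightarrow> real \<times> real" where
  "pmax p q = (max (fst p) (fst q), max (snd p) (snd q))"

definition podot :: "real \<times> real \<Rightarrow> real \<times> real \<Rightarrow> real \<times> real" where
  "podot p q = (luk_odot (fst p) (fst q), luk_odot (snd p) (snd q))"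

definition poplus :: "real \<times> real \<Rightarrow> real \<times> real \<Rightarrow> real \<times> real" where
  "poplus p q = (luk_oplus (fst p) (fst q), luk_oplus (snd p) (snd q))"

definition pl_subalg :: "nat \<Rightarrow> real set \<Rightarrow> bool" where
  "pl_subalg n A \<longleftrightarrow> A \<subseteq> PL n \<and> 0 \<in> A \<and> 1 \<in> A \<and>
     (\<forall>x\<in>A. \<forall>y\<in>A. min x y \<in> A \<and> max x y \<in> A \<and> luk_odot x y \<in> A \<and> luk_oplus x y \<in> A)"

definition pair_subuniv :: "(real \<times> real) set \<Rightarrow> (real \<times> real) set \<Rightarrow> bool" where
  "pair_subuniv S R \<longleftrightarrow> R \<subseteq> S \<and> (0, 0) \<in> R \<and> (1, 1) \<in> R \<and>
     (\<forall>p\<in>R. \<forall>q\<in>R. pmin p q \<in> R \<and> pmax p q \<in> R \<and> podot p q \<in> R \<and> poplus p q \<in> R)"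

definition Cset :: "real \<times> real \<Rightarrow> (real \<times> real) set \<Rightarrow> (real \<times> real) set" where
  "Cset p S = {q \<in> S. fst q \<le> fst p \<and> snd p \<le> snd q}"

end

theory Submission
  imports Defs
begin


lemma PL_bounds: "x \<in> PL m \<Longrightarrow> 0 \<le> x \<and> x \<le> 1"
  unfolding PL_def by (auto simp: divide_le_eq_1)

lemma PL_finite: "finite (PL m)"
proof -
  have "PL m = (\<lambda>i. real i / real m) ` {..m}" unfolding PL_def by auto
  thus ?thesis by simp
qed

lemma PL_frac: "i \<le> m \<Longrightarrow> real i / real m \<in> PL m"
  unfolding PL_def by auto

lemma PL_zero: "0 \<in> PL m" using PL_frac[of 0 m] by simp

lemma PL_one: "m \<ge> 1 \<Longrightarrow> 1 \<in> PL m" using PL_frac[of m m] by simp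

lemma PL_odot: assumes "x \<in> PL m" "y \<in> PL m" shows "luk_odot x y \<in> PL m"
proof -
  obtain i j where ij: "x = real i / real m" "y = real j / real m" "i \<le> m" "j \<le> m"
    using assms unfolding PL_def by auto
  show ?thesis
  proof (cases "m = 0")
    case True thus ?thesis using ij by (simp add: luk_odot_def PL_zero)
  next
    case False
    show ?thesis
    proof (cases "i + j \<ge> m")
      case True
      have e: "x + y - 1 = (real i + real j - real m) / real m" using ij False by (simp add: field_simps)
      have "(real i + real j - real m) / real m \<ge> 0" using True by simp
      hence "luk_odot x y = (real i + real j - real m) / real m" using e by (simp add: luk_odot_def)
      also have "\<dots> = real (i + j - m) / real m" using True by (simp add: of_nat_diff)
      finally have "luk_odot x y = real (i + j - m) / real m" .
      thus ?thesis using ij by (auto intro: PL_frac)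
    next
      case c: False
      have "x + y - 1 = (real i + real j - real m) / real m" using ij False by (simp add: field_simps)
      also have "\<dots> \<le> 0" using c False by (simp add: divide_le_0_iff)
      finally have "luk_odot x y = 0" by (simp add: luk_odot_def)
      thus ?thesis by (simp add: PL_zero)
    qed
  qed
qed

lemma PL_oplus: assumes "x \<in> PL m" "y \<in> PL m" shows "luk_oplus x y \<in> PL m"
proof -
  obtain i j where ij: "x = real i / real m" "y = real j / real m" "i \<le> m" "j \<le> m"
    using assms unfolding PL_def by auto
  show ?thesis
  proof (cases "m = 0")
    case True thus ?thesis using ij by (simp add: luk_oplus_def PL_zero)
  next
    case False
    show ?thesis
    proof (cases "i + j \<le> m")
      case True
      have e: "x + y = real (i + j) / real m" using ij False by (simp add: field_simps)
      have "real (i + j) / real m \<le> 1" using True False by (simp add: divide_le_eq_1)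
      hence "luk_oplus x y = real (i + j) / real m" using e by (simp add: luk_oplus_def)
      thus ?thesis using True PL_frac[of "i+j" m] by simp
    next
      case c: False
      have "x + y = (real i + real j) / real m" using ij False by (simp add: field_simps)
      also have "\<dots> \<ge> 1" using c False by (simp add: le_divide_eq_1)
      finally have "luk_oplus x y = 1" by (simp add: luk_oplus_def)
      thus ?thesis using False by (simp add: PL_one)
    qed
  qed
qed

lemma odot_mono: "x1 \<le> x2 \<Longrightarrow> y1 \<le> y2 \<Longrightarrow> luk_odot x1 y1 \<le> luk_odot x2 y2"
  by (simp add: luk_odot_def)
lemma oplus_mono: "x1 \<le> x2 \<Longrightarrow> y1 \<le> y2 \<Longrightarrow> luk_oplus x1 y1 \<le> luk_oplus x2 y2"
  by (simp add: luk_oplus_def)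

lemma reach_one:
  assumes cl: "\<forall>p\<in>R. \<forall>q\<in>R. poplus p q \<in> R" and d: "(0, d) \<in> R" "d > 0" "d \<le> 1"
  shows "(0, 1) \<in> R"
proof -
  have step: "(0, min 1 (real (Suc m) * d)) \<in> R" for m
  proof (induction m)
    case 0 thus ?case using d by (simp add: min_def)
  next
    case (Suc m)
    have "poplus (0, min 1 (real (Suc m) * d)) (0, d) \<in> R" using cl Suc d by blast
    moreover have "poplus (0, min 1 (real (Suc m) * d)) (0, d) = (0, min 1 (real (Suc (Suc m)) * d))"
      using d by (simp add: poplus_def luk_oplus_def min_def algebra_simps)
    ultimately show ?case by simp
  qed
  obtain m where "1 < real m * d" using reals_Archimedean3[OF d(2)] by blast
  hence "1 \<le> real (Suc m) * d" using d by (simp add: algebra_simps)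
  thus ?thesis using step[of m] by (simp add: min_def)
qed

lemma gap_one:
  assumes cl: "\<forall>p\<in>R. \<forall>q\<in>R. podot p q \<in> R \<and> poplus p q \<in> R"
    and bnd: "\<forall>p\<in>R. 0 \<le> fst p \<and> fst p \<le> 1 \<and> 0 \<le> snd p \<and> snd p \<le> 1"
  shows "(a, b) \<in> R \<Longrightarrow> a < b \<Longrightarrow> 1 / 2 ^ m \<le> b - a \<Longrightarrow> (0, 1) \<in> R"
proof (induction m arbitrary: a b)
  case 0
  then have "a = 0" "b = 1" using bnd by force+
  thus ?case using 0 by simp
next
  case (Suc m)
  have ab: "0 \<le> a" "b \<le> 1" using bnd Suc.prems(1) by force+
  show ?case
  proof (cases "1/2 \<le> a")
    case True
    have "podot (a, b) (a, b) \<in> R" using cl Suc.prems by blast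
    moreover have "podot (a, b) (a, b) = (2*a - 1, 2*b - 1)"
      using True Suc.prems by (simp add: podot_def luk_odot_def)
    ultimately show ?thesis using Suc.IH[of "2*a-1" "2*b-1"] Suc.prems by (simp add: field_simps)
  next
    case F1: False
    show ?thesis
    proof (cases "b \<le> 1/2")
      case True
      have "poplus (a, b) (a, b) \<in> R" using cl Suc.prems by blast
      moreover have "poplus (a, b) (a, b) = (2*a, 2*b)"
        using True Suc.prems by (simp add: poplus_def luk_oplus_def)
      ultimately show ?thesis using Suc.IH[of "2*a" "2*b"] Suc.prems by (simp add: field_simps)
    next
      case False
      have "podot (a, b) (a, b) \<in> R" using cl Suc.prems by blast
      moreover have "podot (a, b) (a, b) = (0, 2*b - 1)"
        using False F1 by (simp add: podot_def luk_odot_def)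
      ultimately show ?thesis using reach_one[of R "2*b-1"] cl False ab by auto
    qed
  qed
qed



lemma part1:
  fixes n k k' :: nat and R :: "(real \<times> real) set"
  assumes kpos: "k \<ge> 1"
    and su: "pair_subuniv (PL n \<times> PL n) R" and le: "\<forall>p\<in>R. fst p \<le> snd p"
    and nd: "\<not> (\<exists>A. pl_subalg n A \<and> R = {(a, a) | a. a \<in> A})"
    and pr: "fst ` R \<times> snd ` R = PL k \<times> PL k'"
  shows "\<exists>y :: nat \<Rightarrow> real.
            (\<forall>i\<le>k. y i \<in> PL k' \<and> (real i / real k, y i) \<in> R
                 \<and> (\<forall>z\<in>PL k'. (real i / real k, z) \<in> R \<longrightarrow> y i \<le> z))
          \<and> y 0 = 0 \<and> y k = 1
          \<and> R = (\<Union>i\<in>{0..k}. Cset (real i / real k, y i) (PL k \<times> PL k'))"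
proof -
  have cl: "\<forall>p\<in>R. \<forall>q\<in>R. pmin p q \<in> R \<and> pmax p q \<in> R \<and> podot p q \<in> R \<and> poplus p q \<in> R"
    and sub: "R \<subseteq> PL n \<times> PL n" and z: "(0,0) \<in> R" and o: "(1,1) \<in> R"
    using su unfolding pair_subuniv_def by auto
  have bnd: "\<forall>p\<in>R. 0 \<le> fst p \<and> fst p \<le> 1 \<and> 0 \<le> snd p \<and> snd p \<le> 1"
    using sub PL_bounds by fastforce
  have fR: "fst ` R = PL k" and sR: "snd ` R = PL k'"
    using pr PL_zero[of k] PL_zero[of k'] unfolding times_eq_iff by auto
  have "\<exists>a b. (a, b) \<in> R \<and> a < b"
  proof (rule ccontr)
    assume "\<not> ?thesis"
    hence eq: "\<forall>p\<in>R. fst p = snd p" using le by force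
    define A where "A = fst ` R"
    have Rd: "R = {(a, a) | a. a \<in> A}"
    proof -
      have "p \<in> R \<longleftrightarrow> (\<exists>a. p = (a,a) \<and> a \<in> A)" for p
      proof
        assume "p \<in> R" thus "\<exists>a. p = (a,a) \<and> a \<in> A"
          using eq unfolding A_def by (intro exI[of _ "fst p"]) (auto simp: prod_eq_iff)
      next
        assume "\<exists>a. p = (a,a) \<and> a \<in> A"
        then obtain q where q: "q \<in> R" "p = (fst q, fst q)" unfolding A_def by auto
        have "q = (fst q, snd q)" by simp
        also have "\<dots> = (fst q, fst q)" using eq q by simp
        finally show "p \<in> R" using q by simp
      qed
      thus ?thesis by auto
    qed
    have "pl_subalg n A"
      unfolding pl_subalg_def
    proof (intro conjI ballI)
      show "A \<subseteq> PL n" using sub unfolding A_def by auto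
      show "0 \<in> A" using z Rd by auto
      show "1 \<in> A" using o Rd by auto
      fix x y assume "x \<in> A" "y \<in> A"
      hence xy: "(x,x) \<in> R" "(y,y) \<in> R" using Rd by auto
      show "min x y \<in> A" using cl xy Rd unfolding pmin_def by force
      show "max x y \<in> A" using cl xy Rd unfolding pmax_def by force
      show "luk_odot x y \<in> A" using cl xy Rd unfolding podot_def by force
      show "luk_oplus x y \<in> A" using cl xy Rd unfolding poplus_def by force
    qed
    thus False using nd Rd by blast
  qed
  then obtain a b where ab: "(a, b) \<in> R" "a < b" by blast
  obtain m where "1 / 2 ^ m < b - a"
    using real_arch_pow_inv[of "b - a" "1/2"] ab by (auto simp: power_divide)
  hence one: "(0, 1) \<in> R" using gap_one[of R a b m] cl bnd ab by auto
  define y where "y i = Min {z \<in> PL k'. (real i / real k, z) \<in> R}" for i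
  have yi: "y i \<in> PL k' \<and> (real i / real k, y i) \<in> R
                 \<and> (\<forall>z\<in>PL k'. (real i / real k, z) \<in> R \<longrightarrow> y i \<le> z)" if "i \<le> k" for i
  proof -
    let ?Z = "{z \<in> PL k'. (real i / real k, z) \<in> R}"
    have fin: "finite ?Z" using PL_finite by simp
    have "real i / real k \<in> fst ` R" using fR PL_frac that by auto
    then obtain z where "(real i / real k, z) \<in> R" by force
    moreover hence "z \<in> PL k'" using sR by force
    ultimately have ne: "?Z \<noteq> {}" by blast
    show ?thesis using Min_in[OF fin ne] Min_le[OF fin] unfolding y_def by auto
  qed
  have y0: "y 0 = 0"
  proof -
    have "y 0 \<le> 0" using yi[of 0] z PL_zero by simp
    thus ?thesis using yi[of 0] PL_bounds by force
  qed
  have yk: "y k = 1"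
  proof -
    have "(1, y k) \<in> R" using yi[of k] kpos by simp
    hence "1 \<le> y k" using le by force
    thus ?thesis using yi[of k] PL_bounds by force
  qed
  have "R = (\<Union>i\<in>{0..k}. Cset (real i / real k, y i) (PL k \<times> PL k'))"
  proof
    show "R \<subseteq> (\<Union>i\<in>{0..k}. Cset (real i / real k, y i) (PL k \<times> PL k'))"
    proof
      fix p assume p: "p \<in> R"
      obtain x w where pxw: "p = (x, w)" by force
      have x: "x \<in> PL k" using fR p pxw by force
      have w: "w \<in> PL k'" using sR p pxw by force
      obtain i where i: "x = real i / real k" "i \<le> k" using x unfolding PL_def by auto
      have "y i \<le> w" using yi[OF i(2)] p pxw i w by auto
      thus "p \<in> (\<Union>i\<in>{0..k}. Cset (real i / real k, y i) (PL k \<times> PL k'))"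
        using i x w pxw unfolding Cset_def by auto
    qed
    show "(\<Union>i\<in>{0..k}. Cset (real i / real k, y i) (PL k \<times> PL k')) \<subseteq> R"
    proof
      fix p assume "p \<in> (\<Union>i\<in>{0..k}. Cset (real i / real k, y i) (PL k \<times> PL k'))"
      then obtain i x' z' where i: "i \<le> k" and p: "p = (x', z')" "x' \<in> PL k" "z' \<in> PL k'"
        "x' \<le> real i / real k" "y i \<le> z'" unfolding Cset_def by auto
      have P: "(real i / real k, y i) \<in> R" using yi[OF i] by simp
      obtain w where w: "(x', w) \<in> R" using fR p by force
      obtain u where u: "(u, z') \<in> R" using sR p by force
      have "poplus (x', w) (0, 1) \<in> R" using cl w one by blast
      moreover have "poplus (x', w) (0, 1) = (x', 1)"
        using bnd w by (force simp: poplus_def luk_oplus_def)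
      ultimately have x1: "(x', 1) \<in> R" by simp
      have "pmin (real i / real k, y i) (x', 1) \<in> R" using cl x1 P by blast
      moreover have "pmin (real i / real k, y i) (x', 1) = (x', y i)"
        using p bnd P by (force simp: pmin_def)
      ultimately have xy: "(x', y i) \<in> R" by simp
      have "podot (0, 1) (u, z') \<in> R" using cl u one by blast
      moreover have "podot (0, 1) (u, z') = (0, z')"
        using bnd u by (force simp: podot_def luk_odot_def)
      ultimately have z0: "(0, z') \<in> R" by simp
      have "pmax (x', y i) (0, z') \<in> R" using cl xy z0 by blast
      moreover have "pmax (x', y i) (0, z') = (x', z')"
        using p bnd xy by (force simp: pmax_def)
      ultimately show "p \<in> R" using p by simp
    qed
  qed
  thus ?thesis using yi y0 yk by blast
qed



lemma part2:
  fixes k k' :: nat and y :: "nat \<Rightarrow> real"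
  assumes kpos: "k \<ge> 1" and k'pos: "k' \<ge> 1"
    and yPL: "\<forall>i\<le>k. y i \<in> PL k'"
    and mono: "\<forall>i j. i \<le> j \<and> j \<le> k \<longrightarrow> y i \<le> y j"
    and y0: "y 0 = 0" and yk: "y k = 1"
  shows "(let R = (\<Union>i\<in>{0..k}. Cset (real i / real k, y i) (PL k \<times> PL k')) in
            pair_subuniv (PL k \<times> PL k') R \<longleftrightarrow>
            (\<forall>i j. 1 \<le> i \<and> i \<le> k - 1 \<and> 1 \<le> j \<and> j \<le> k - 1 \<longrightarrow>
               podot (real i / real k, y i) (real j / real k, y j) \<in> R
             \<and> poplus (real i / real k, y i) (real j / real k, y j) \<in> R))"
proof -
  define S where "S = PL k \<times> PL k'"
  define P where "P i = (real i / real k, y i)" for i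
  define R where "R = (\<Union>i\<in>{0..k}. Cset (P i) S)"
  have ybnd: "0 \<le> y i \<and> y i \<le> 1" if "i \<le> k" for i using yPL that PL_bounds by blast
  have Pin: "P i \<in> R" if "i \<le> k" for i
    using that yPL PL_frac[OF that] unfolding R_def P_def S_def Cset_def by auto
  have RS: "R \<subseteq> S" unfolding R_def Cset_def by auto
  have memR: "p \<in> R \<longleftrightarrow> (\<exists>i\<le>k. p \<in> S \<and> fst p \<le> real i / real k \<and> y i \<le> snd p)" for p
    unfolding R_def Cset_def P_def by auto
  have fin_le: "real i / real k \<le> 1" if "i \<le> k" for i using that kpos by simp
  have "pair_subuniv S R \<longleftrightarrow>
     (\<forall>i j. 1 \<le> i \<and> i \<le> k - 1 \<and> 1 \<le> j \<and> j \<le> k - 1 \<longrightarrow>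
               podot (P i) (P j) \<in> R \<and> poplus (P i) (P j) \<in> R)" (is "_ \<longleftrightarrow> ?C")
  proof
    assume "pair_subuniv S R"
    thus ?C using Pin unfolding pair_subuniv_def by (meson diff_le_self le_trans)
  next
    assume C: ?C
    have gen: "podot (P i) (P j) \<in> R \<and> poplus (P i) (P j) \<in> R" if "i \<le> k" "j \<le> k" for i j
    proof -
      have Pi: "0 \<le> real i / real k" "real i / real k \<le> 1" "0 \<le> y i" "y i \<le> 1"
        using fin_le ybnd that by auto
      have Pj: "0 \<le> real j / real k" "real j / real k \<le> 1" "0 \<le> y j" "y j \<le> 1"
        using fin_le ybnd that by auto
      have P0: "P 0 = (0, 0)" using y0 unfolding P_def by simp
      have Pk: "P k = (1, 1)" using yk kpos unfolding P_def by simp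
      show ?thesis
      proof (cases "i = 0 \<or> j = 0 \<or> i = k \<or> j = k")
        case True
        then consider "i = 0" | "j = 0" | "i = k" | "j = k" by blast
        thus ?thesis
        proof cases
          case 1
          have "podot (P i) (P j) = P 0" "poplus (P i) (P j) = P j"
            using 1 Pj P0 unfolding P_def by (auto simp: podot_def poplus_def luk_odot_def luk_oplus_def y0)
          thus ?thesis using Pin that by simp
        next
          case 2
          have "podot (P i) (P j) = P 0" "poplus (P i) (P j) = P i"
            using 2 Pi P0 unfolding P_def by (auto simp: podot_def poplus_def luk_odot_def luk_oplus_def y0)
          thus ?thesis using Pin that by simp
        next
          case 3
          have "podot (P i) (P j) = P j" "poplus (P i) (P j) = P k"
            using 3 Pj Pk kpos unfolding P_def by (auto simp: podot_def poplus_def luk_odot_def luk_oplus_def yk)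
          thus ?thesis using Pin that by simp
        next
          case 4
          have "podot (P i) (P j) = P i" "poplus (P i) (P j) = P k"
            using 4 Pi Pk kpos unfolding P_def by (auto simp: podot_def poplus_def luk_odot_def luk_oplus_def yk)
          thus ?thesis using Pin that by simp
        qed
      next
        case False
        hence "1 \<le> i \<and> i \<le> k - 1 \<and> 1 \<le> j \<and> j \<le> k - 1" using that by auto
        thus ?thesis using C by blast
      qed
    qed
    show "pair_subuniv S R"
      unfolding pair_subuniv_def
    proof (intro conjI ballI)
      show "R \<subseteq> S" by (rule RS)
      show "(0, 0) \<in> R" using Pin[of 0] y0 unfolding P_def by simp
      show "(1, 1) \<in> R" using Pin[of k] yk kpos unfolding P_def by simp
      fix p q assume p: "p \<in> R" and q: "q \<in> R"
      obtain i where i: "i \<le> k" "p \<in> S" "fst p \<le> real i / real k" "y i \<le> snd p" using p memR by blast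
      obtain j where j: "j \<le> k" "q \<in> S" "fst q \<le> real j / real k" "y j \<le> snd q" using q memR by blast
      have pS: "fst p \<in> PL k" "snd p \<in> PL k'" and qS: "fst q \<in> PL k" "snd q \<in> PL k'"
        using i j unfolding S_def by auto
      show "pmin p q \<in> R"
      proof (cases "i \<le> j")
        case True
        have "y i \<le> y j" using mono True j by blast
        moreover have "pmin p q \<in> S" using pS qS unfolding S_def pmin_def min_def by auto
        ultimately show ?thesis using i j memR[of "pmin p q"] unfolding pmin_def by fastforce
      next
        case False
        have "y j \<le> y i" using mono False i by auto
        moreover have "pmin p q \<in> S" using pS qS unfolding S_def pmin_def min_def by auto
        ultimately show ?thesis using i j memR[of "pmin p q"] unfolding pmin_def by fastforce
      qed
      show "pmax p q \<in> R"
      proof (cases "i \<le> j")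
        case True
        have "y i \<le> y j" "real i / real k \<le> real j / real k" using mono True j by (auto simp: divide_right_mono)
        moreover have "pmax p q \<in> S" using pS qS unfolding S_def pmax_def max_def by auto
        ultimately show ?thesis using i j memR[of "pmax p q"] unfolding pmax_def by fastforce
      next
        case False
        have "y j \<le> y i" "real j / real k \<le> real i / real k" using mono False i by (auto simp: divide_right_mono)
        moreover have "pmax p q \<in> S" using pS qS unfolding S_def pmax_def max_def by auto
        ultimately show ?thesis using i j memR[of "pmax p q"] unfolding pmax_def by fastforce
      qed
      show "podot p q \<in> R"
      proof -
        obtain l where l: "l \<le> k" "fst (podot (P i) (P j)) \<le> real l / real k" "y l \<le> snd (podot (P i) (P j))"
          using gen[OF i(1) j(1)] memR by blast
        have "fst (podot p q) \<le> fst (podot (P i) (P j))" "snd (podot (P i) (P j)) \<le> snd (podot p q)"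
          using i j unfolding podot_def P_def by (auto intro!: odot_mono)
        moreover have "podot p q \<in> S" using pS qS PL_odot unfolding S_def podot_def by auto
        ultimately show ?thesis using l memR by fastforce
      qed
      show "poplus p q \<in> R"
      proof -
        obtain l where l: "l \<le> k" "fst (poplus (P i) (P j)) \<le> real l / real k" "y l \<le> snd (poplus (P i) (P j))"
          using gen[OF i(1) j(1)] memR by blast
        have "fst (poplus p q) \<le> fst (poplus (P i) (P j))" "snd (poplus (P i) (P j)) \<le> snd (poplus p q)"
          using i j unfolding poplus_def P_def by (auto intro!: oplus_mono)
        moreover have "poplus p q \<in> S" using pS qS PL_oplus unfolding S_def poplus_def by auto
        ultimately show ?thesis using l memR by fastforce
      qed
    qed
  qed
  thus ?thesis unfolding Let_def R_def S_def P_def by simp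
qed



theorem proposition3p12:
  fixes n k k' :: nat
  assumes "n \<ge> 1" and "k dvd n" and "k' dvd n"
  shows
   "(\<forall>R. pair_subuniv (PL n \<times> PL n) R
        \<and> (\<forall>p\<in>R. fst p \<le> snd p)
        \<and> \<not> (\<exists>A. pl_subalg n A \<and> R = {(a, a) | a. a \<in> A})
        \<and> fst ` R \<times> snd ` R = PL k \<times> PL k'
      \<longrightarrow> (\<exists>y :: nat \<Rightarrow> real.
            (\<forall>i\<le>k. y i \<in> PL k' \<and> (real i / real k, y i) \<in> R
                 \<and> (\<forall>z\<in>PL k'. (real i / real k, z) \<in> R \<longrightarrow> y i \<le> z))
          \<and> y 0 = 0 \<and> y k = 1
          \<and> R = (\<Union>i\<in>{0..k}. Cset (real i / real k, y i) (PL k \<times> PL k'))))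
    \<and>
    (\<forall>y :: nat \<Rightarrow> real.
        (\<forall>i\<le>k. y i \<in> PL k')
        \<and> (\<forall>i j. i \<le> j \<and> j \<le> k \<longrightarrow> y i \<le> y j)
        \<and> y 0 = 0 \<and> y k = 1
        \<and> (\<forall>i. 1 \<le> i \<and> i \<le> k - 1 \<longrightarrow> real i / real k \<le> y i)
      \<longrightarrow> (let R = (\<Union>i\<in>{0..k}. Cset (real i / real k, y i) (PL k \<times> PL k')) in
            pair_subuniv (PL k \<times> PL k') R \<longleftrightarrow>
            (\<forall>i j. 1 \<le> i \<and> i \<le> k - 1 \<and> 1 \<le> j \<and> j \<le> k - 1 \<longrightarrow>
               podot (real i / real k, y i) (real j / real k, y j) \<in> R
             \<and> poplus (real i / real k, y i) (real j / real k, y j) \<in> R)))"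
  proof -
  have k1: "k \<ge> 1" using assms by (cases "k = 0") auto
  have k'1: "k' \<ge> 1" using assms by (cases "k' = 0") auto
  show ?thesis
  proof (intro conjI allI impI)
    fix R assume "pair_subuniv (PL n \<times> PL n) R
        \<and> (\<forall>p\<in>R. fst p \<le> snd p)
        \<and> \<not> (\<exists>A. pl_subalg n A \<and> R = {(a, a) | a. a \<in> A})
        \<and> fst ` R \<times> snd ` R = PL k \<times> PL k'"
    thus "\<exists>y :: nat \<Rightarrow> real.
            (\<forall>i\<le>k. y i \<in> PL k' \<and> (real i / real k, y i) \<in> R
                 \<and> (\<forall>z\<in>PL k'. (real i / real k, z) \<in> R \<longrightarrow> y i \<le> z))
          \<and> y 0 = 0 \<and> y k = 1
          \<and> R = (\<Union>i\<in>{0..k}. Cset (real i / real k, y i) (PL k \<times> PL k'))"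
      using part1[OF k1] by blast
  next
    fix y :: "nat \<Rightarrow> real"
    assume "(\<forall>i\<le>k. y i \<in> PL k')
        \<and> (\<forall>i j. i \<le> j \<and> j \<le> k \<longrightarrow> y i \<le> y j)
        \<and> y 0 = 0 \<and> y k = 1
        \<and> (\<forall>i. 1 \<le> i \<and> i \<le> k - 1 \<longrightarrow> real i / real k \<le> y i)"
    thus "(let R = (\<Union>i\<in>{0..k}. Cset (real i / real k, y i) (PL k \<times> PL k')) in
            pair_subuniv (PL k \<times> PL k') R \<longleftrightarrow>
            (\<forall>i j. 1 \<le> i \<and> i \<le> k - 1 \<and> 1 \<le> j \<and> j \<le> k - 1 \<longrightarrow>
               podot (real i / real k, y i) (real j / real k, y j) \<in> R
             \<and> poplus (real i / real k, y i) (real j / real k, y j) \<in> R))"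
      using part2[OF k1 k'1] by blast
  qed
qed

end
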